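(* For any $n\in\mathbb{N}$ with $n\geq2$, the free monoid of rank $2^{n-1}$ embeds into $\mathrm{lps}_n$.
   Context: Let $\mathcal{A}_n=\{1<2<\cdots<n\}$. An lPS tableau is a finite (possibly empty) sequence of nonempty bottom-justified columns of boxes filled with positive integers, such that the entries of each column are strictly decreasing from top to bottom and the bottom entries of the columns form a weakly increasing sequence from left to right. Right insertion of a symbol $a$ into an lPS tableau $B$: if $a$ is greater than or equal to every entry of the bottom row, append a new column consisting of $a$ at the right end; otherwise, let $z$ be the leftmost bottom-row entry with $z>a$ and put $a$ in a new box at the bottom of the column of $z$ (the previous entries of that column move up one box). For $w=w_1\cdots w_k$, $\mathfrak{R}_\ell(w)$ is obtained by starting with the empty tableau and right-inserting $w_1,\dots,w_k$ in order. The monoid $\mathrm{lps}_n$ is the quotient of the free monoid $\mathcal{A}_n^*$ by the congruence $u\equiv v\iff\mathfrak{R}_\ell(u)=\mathfrak{R}_\ell(v)$. *)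

theory Defs
  imports Main
begin

text \<open>An lPS tableau is represented as a list of columns (left to right);
each column is a nonempty list of entries listed from BOTTOM to TOP,
so the bottom entry of a column c is hd c.\<close>

type_synonym tableau = "nat list list"

fun lps_rinsert :: "tableau \<Rightarrow> nat \<Rightarrow> tableau" where
  "lps_rinsert [] a = [[a]]"
| "lps_rinsert (c # cs) a =
     (if a < hd c then (a # c) # cs else c # lps_rinsert cs a)"

definition lps_R :: "nat list \<Rightarrow> tableau" where
  "lps_R w = foldl lps_rinsert [] w"

definition lps_equiv :: "nat \<Rightarrow> nat list \<Rightarrow> nat list \<Rightarrow> bool" where
  "lps_equiv n u v \<longleftrightarrow> u \<in> lists {1..n} \<and> v \<in> lists {1..n} \<and> lps_R u = lps_R v"

text \<open>A monoid embedding of the free monoid on k generators (words over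
{0..<k}) into lps_n, with elements of lps_n represented by words over A_n
modulo lps_equiv: a map f that is a homomorphism modulo the congruence
and injective modulo the congruence.\<close>
definition free_monoid_embeds_lps :: "nat \<Rightarrow> nat \<Rightarrow> bool" where
  "free_monoid_embeds_lps k n \<longleftrightarrow>
     (\<exists>f :: nat list \<Rightarrow> nat list.
        (\<forall>u \<in> lists {0..<k}. f u \<in> lists {1..n}) \<and>
        lps_equiv n (f []) [] \<and>
        (\<forall>u \<in> lists {0..<k}. \<forall>v \<in> lists {0..<k}. lps_equiv n (f (u @ v)) (f u @ f v)) \<and>
        (\<forall>u \<in> lists {0..<k}. \<forall>v \<in> lists {0..<k}. lps_equiv n (f u) (f v) \<longrightarrow> u = v))"

end

theory Submission
  imports Defs
begin

lemma bit_high: "(i::nat) < 2^m \<Longrightarrow> m \<le> k \<Longrightarrow> \<not> bit i k"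
  by (metis bit_take_bit_iff less_le_not_le take_bit_nat_eq_self)

lemma rins_app: "\<forall>c\<in>set T. hd c \<le> a \<Longrightarrow> lps_rinsert (T @ X) a = T @ lps_rinsert X a"
  by (induction T) auto

lemma fold_col:
  "sorted_wrt (<) c \<Longrightarrow> c \<noteq> [] \<Longrightarrow> \<forall>d\<in>set T. hd d \<le> hd c
   \<Longrightarrow> foldl lps_rinsert T (rev c) = T @ [c]"
proof (induction c)
  case Nil then show ?case by simp
next
  case (Cons x c')
  show ?case
  proof (cases "c' = []")
    case True
    then show ?thesis using Cons.prems rins_app[of T x "[]"] by simp
  next
    case False
    have s: "sorted_wrt (<) c'" using Cons.prems by simp
    have lt: "x < hd c'" using Cons.prems False by (cases c') auto
    have "\<forall>d\<in>set T. hd d \<le> hd c'" using Cons.prems lt by force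
    then have IH: "foldl lps_rinsert T (rev c') = T @ [c']" using Cons.IH s False by blast
    have "foldl lps_rinsert T (rev (x # c')) = lps_rinsert (T @ [c']) x"
      using IH by simp
    also have "\<dots> = T @ lps_rinsert [c'] x" using Cons.prems by (simp add: rins_app)
    also have "\<dots> = T @ [x # c']" using lt by simp
    finally show ?thesis .
  qed
qed

definition col :: "nat \<Rightarrow> nat \<Rightarrow> nat list" where
  "col m i = 1 # map (\<lambda>k. k + 2) (filter (bit i) [0..<m])"

lemma col_sorted: "sorted_wrt (<) (col m i)"
  unfolding col_def by (auto simp: sorted_wrt_map sorted_wrt_filter)

lemma col_set: "set (col m i) \<subseteq> {1..m+1}"
  unfolding col_def by auto

lemma col_inj: "inj_on (col m) {0..<2^m}"
proof (rule inj_onI)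
  fix i j assume i: "i \<in> {0..<(2::nat)^m}" and j: "j \<in> {0..<(2::nat)^m}" and e: "col m i = col m j"
  have "map (\<lambda>k. k + 2) (filter (bit i) [0..<m]) = map (\<lambda>k. k + 2) (filter (bit j) [0..<m])"
    using e unfolding col_def by simp
  then have "filter (bit i) [0..<m] = filter (bit j) [0..<m]"
    by (simp add: inj_map_eq_map inj_on_def)
  then have "set (filter (bit i) [0..<m]) = set (filter (bit j) [0..<m])" by simp
  then have lo: "\<And>k. k < m \<Longrightarrow> bit i k = bit j k"
  proof -
    fix k assume k: "k < m"
    have "k \<in> set (filter (bit i) [0..<m]) \<longleftrightarrow> k \<in> set (filter (bit j) [0..<m])"
      using \<open>set (filter (bit i) [0..<m]) = set (filter (bit j) [0..<m])\<close> by simp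
    then show "bit i k = bit j k" using k by simp
  qed
  have "\<forall>k. bit i k = bit j k"
  proof
    fix k show "bit i k = bit j k"
      using lo[of k] bit_high[of i m k] bit_high[of j m k] i j by (cases "k < m") auto
  qed
  then show "i = j" by (simp add: bit_eq_iff)
qed

definition gf :: "nat \<Rightarrow> nat list \<Rightarrow> nat list" where
  "gf m u = concat (map (\<lambda>i. rev (col m i)) u)"

lemma R_gf: "lps_R (gf m u) = map (col m) u"
proof (induction u rule: rev_induct)
  case Nil then show ?case by (simp add: lps_R_def gf_def)
next
  case (snoc x xs)
  have "lps_R (gf m (xs @ [x])) = foldl lps_rinsert (lps_R (gf m xs)) (rev (col m x))"
    by (simp add: lps_R_def gf_def)
  also have "\<dots> = map (col m) xs @ [col m x]"
  proof -
    have "\<forall>d\<in>set (map (col m) xs). hd d \<le> hd (col m x)" by (auto simp: col_def)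
    then show ?thesis using snoc.IH col_sorted[of m x] by (subst fold_col) (auto simp: col_def)
  qed
  finally show ?case by simp
qed

lemma gf_lists: "gf m u \<in> lists {1..m+1}"
  using col_set unfolding gf_def by fastforce

theorem proposition4p1:
  fixes n :: nat
  assumes "n \<ge> 2"
  shows "free_monoid_embeds_lps (2 ^ (n - 1)) n"
proof -
  let ?m = "n - 1"
  have nm: "?m + 1 = n" using assms by simp
  have L: "\<And>u. gf ?m u \<in> lists {1..n}" using gf_lists[of ?m] nm by metis
  show ?thesis
    unfolding free_monoid_embeds_lps_def
  proof (intro exI[of _ "gf ?m"] conjI ballI impI)
    fix u show "gf ?m u \<in> lists {1..n}" by (rule L)
  next
    show "lps_equiv n (gf ?m []) []" by (simp add: lps_equiv_def gf_def)
  next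
    fix u v show "lps_equiv n (gf ?m (u @ v)) (gf ?m u @ gf ?m v)"
      using L[of "u @ v"] by (simp add: lps_equiv_def gf_def)
  next
    fix u v assume u: "u \<in> lists {0..<2 ^ (n - 1)}" and v: "v \<in> lists {0..<2 ^ (n - 1)}"
      and e: "lps_equiv n (gf ?m u) (gf ?m v)"
    have "map (col ?m) u = map (col ?m) v" using e by (simp add: lps_equiv_def R_gf)
    moreover have "inj_on (col ?m) (set u \<union> set v)"
      proof (rule inj_on_subset[OF col_inj[of ?m]])
      show "set u \<union> set v \<subseteq> {0..<2 ^ (n - 1)}" using u v by (simp add: in_lists_conv_set subset_iff)
    qed
    ultimately show "u = v" using inj_on_map_eq_map by blast
  qed
qed

end
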